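(* Let $V$ be a finite nonempty set and $f:\{0,1\}^V\to\{0,1\}^V$. Suppose that for every integer $k$ with $1\leq k\leq |V|$, there are at most $2^k-1$ points $x\in\{0,1\}^V$ such that the local interaction graph $Gf(x)$ has a cycle of length at most $k$. Then $f$ has a unique fixed point.
   Context: For $x\in\{0,1\}^V$, $j\in V$, $\alpha\in\{0,1\}$, let $x^{j\alpha}$ be the point equal to $x$ except that its $j$-component is $\alpha$. The local interaction graph $Gf(x)$ is the signed digraph with vertex set $V$ having, for $i,j\in V$, a positive arc from $j$ to $i$ if $f_i(x^{j1})-f_i(x^{j0})=1$ and a negative arc from $j$ to $i$ if $f_i(x^{j1})-f_i(x^{j0})=-1$ (and no arc from $j$ to $i$ otherwise); loops are allowed. A cycle is a subgraph whose underlying unsigned digraph is a directed cycle (a loop is a cycle of length 1); its length is its number of arcs. *)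

theory Defs
  imports Main
begin

text \<open>Points of {0,1}^V are functions V \<Rightarrow> bool (True = 1, False = 0);
  the finite nonempty vertex set V is a finite type 'v.\<close>

definition bit :: "bool \<Rightarrow> int" where
  "bit b = (if b then 1 else 0)"

text \<open>Signed arcs of the local interaction graph Gf(x): (j, s, i) means an arc from j
  to i of sign s, where s = f_i(x^{j1}) - f_i(x^{j0}) and s is 1 or -1.\<close>
definition local_graph :: "(('v \<Rightarrow> bool) \<Rightarrow> ('v \<Rightarrow> bool)) \<Rightarrow> ('v \<Rightarrow> bool) \<Rightarrow> ('v \<times> int \<times> 'v) set" where
  "local_graph f x = {(j, s, i). s = bit (f (x(j := True)) i) - bit (f (x(j := False)) i) \<and> s \<noteq> 0}"

definition has_cycle_of_length :: "(('v \<Rightarrow> bool) \<Rightarrow> ('v \<Rightarrow> bool)) \<Rightarrow> ('v \<Rightarrow> bool) \<Rightarrow> nat \<Rightarrow> bool" where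
  "has_cycle_of_length f x l \<longleftrightarrow> (\<exists>vs :: 'v list. length vs = l \<and> l \<ge> 1 \<and> distinct vs \<and>
     (\<forall>t < l. \<exists>s. (vs ! t, s, vs ! ((t + 1) mod l)) \<in> local_graph f x))"

definition has_short_cycle :: "(('v \<Rightarrow> bool) \<Rightarrow> ('v \<Rightarrow> bool)) \<Rightarrow> ('v \<Rightarrow> bool) \<Rightarrow> nat \<Rightarrow> bool" where
  "has_short_cycle f x k \<longleftrightarrow> (\<exists>l \<le> k. has_cycle_of_length f x l)"

end

theory Submission
  imports Defs
begin

lemma sinkfree_cycle:
  fixes I :: "'a set" and E :: "'a \<Rightarrow> 'a \<Rightarrow> bool"
  assumes fin: "finite I" and ne: "I \<noteq> {}" and sf: "\<forall>j\<in>I. \<exists>i\<in>I. E j i"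
  shows "\<exists>vs. length vs \<ge> 1 \<and> length vs \<le> card I \<and> distinct vs \<and> set vs \<subseteq> I \<and>
           (\<forall>t<length vs. E (vs!t) (vs!((t+1) mod length vs)))"
proof -
  obtain j0 where j0: "j0 \<in> I" using ne by blast
  define nxt where "nxt j = (SOME i. i \<in> I \<and> E j i)" for j
  have nxt: "j \<in> I \<Longrightarrow> nxt j \<in> I \<and> E j (nxt j)" for j
    unfolding nxt_def using sf by (metis (mono_tags, lifting) someI_ex)
  define p where "p n = (nxt ^^ n) j0" for n
  have pI: "p n \<in> I" for n
    by (induction n) (auto simp: p_def j0 nxt)
  have pS: "p (Suc n) = nxt (p n)" for n by (simp add: p_def)
  have "\<not> inj_on p {0..card I}"
  proof
    assume "inj_on p {0..card I}"
    then have "card (p ` {0..card I}) = card {0..card I}" by (rule card_image)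
    moreover have "p ` {0..card I} \<subseteq> I" using pI by auto
    then have "card (p ` {0..card I}) \<le> card I" by (rule card_mono[OF fin])
    ultimately show False by simp
  qed
  then obtain a b where ab: "a < b" "p a = p b"
    unfolding inj_on_def by (metis linorder_neqE_nat)
  define b0 where "b0 = (LEAST b. \<exists>a<b. p a = p b)"
  have ex: "\<exists>a<b0. p a = p b0" unfolding b0_def using ab by (intro LeastI_ex[where P="\<lambda>b. \<exists>a<b. p a = p b"]) blast
  then obtain a0 where a0: "a0 < b0" "p a0 = p b0" by blast
  have mini: "\<And>s t. s < t \<Longrightarrow> t < b0 \<Longrightarrow> p s \<noteq> p t"
    unfolding b0_def using not_less_Least by blast
  define vs where "vs = map p [a0..<b0]"
  have len: "length vs = b0 - a0" by (simp add: vs_def)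
  have dist: "distinct vs"
    unfolding vs_def distinct_map
  proof
    show "distinct [a0..<b0]" by simp
    show "inj_on p (set [a0..<b0])"
      unfolding inj_on_def using mini by (metis atLeastLessThan_iff linorder_neqE_nat set_upt)
  qed
  have setv: "set vs \<subseteq> I" using pI by (auto simp: vs_def)
  have "length vs \<le> card I"
    using distinct_card[OF dist] card_mono[OF fin setv] by simp
  moreover have "\<forall>t<length vs. E (vs!t) (vs!((t+1) mod length vs))"
  proof (intro allI impI)
    fix t assume t: "t < length vs"
    have vt: "vs ! t = p (a0 + t)" using t by (simp add: vs_def len)
    have e: "E (p (a0+t)) (p (Suc (a0+t)))" using nxt[OF pI] pS by simp
    show "E (vs!t) (vs!((t+1) mod length vs))"
    proof (cases "t + 1 < length vs")
      case True
      then have "vs ! ((t+1) mod length vs) = p (Suc (a0+t))" by (simp add: vs_def len)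
      then show ?thesis using e vt by simp
    next
      case False
      then have "t + 1 = length vs" using t by simp
      then have "vs ! ((t+1) mod length vs) = p a0" "Suc (a0 + t) = b0"
        using a0 len by (auto simp: vs_def)
      then show ?thesis using e vt a0 by simp
    qed
  qed
  ultimately show ?thesis using dist setv len a0 by (intro exI[of _ vs]) auto
qed

definition cube :: "'v set \<Rightarrow> ('v \<Rightarrow> bool) \<Rightarrow> ('v \<Rightarrow> bool) set" where
  "cube I z = {x. \<forall>i. i \<notin> I \<longrightarrow> x i = z i}"

definition hs :: "(('v \<Rightarrow> bool) \<Rightarrow> ('v \<Rightarrow> bool)) \<Rightarrow> 'v set \<Rightarrow> ('v \<Rightarrow> bool) \<Rightarrow> 'v set" where
  "hs f I x = {i\<in>I. f x i \<noteq> x i}"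

definition cnt :: "(('v \<Rightarrow> bool) \<Rightarrow> ('v \<Rightarrow> bool)) \<Rightarrow> 'v set \<Rightarrow> ('v \<Rightarrow> bool) \<Rightarrow> 'v set \<Rightarrow> nat" where
  "cnt f I z A = card {x \<in> cube I z. hs f I x = A}"

lemma split_cnt:
  fixes f :: "('v::finite \<Rightarrow> bool) \<Rightarrow> ('v \<Rightarrow> bool)"
  assumes v: "v \<in> I" and B: "B \<subseteq> I - {v}"
  shows "cnt f I z B + cnt f I z (insert v B) =
         cnt f (I-{v}) (z(v:=False)) B + cnt f (I-{v}) (z(v:=True)) B"
proof -
  define S1 where "S1 = {x \<in> cube I z. hs f I x = B}"
  define S2 where "S2 = {x \<in> cube I z. hs f I x = insert v B}"
  define T1 where "T1 = {x \<in> cube (I-{v}) (z(v:=False)). hs f (I-{v}) x = B}"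
  define T2 where "T2 = {x \<in> cube (I-{v}) (z(v:=True)). hs f (I-{v}) x = B}"
  have vB: "v \<notin> B" using B by auto
  have d1: "S1 \<inter> S2 = {}" using vB by (auto simp: S1_def S2_def)
  have d2: "T1 \<inter> T2 = {}" by (auto simp: T1_def T2_def cube_def)
  have hsd: "hs f (I-{v}) x = hs f I x - {v}" for x by (auto simp: hs_def)
  have hsI: "hs f I x \<subseteq> I" for x by (auto simp: hs_def)
  have cb: "x \<in> cube (I-{v}) (z(v:=b)) \<longleftrightarrow> x \<in> cube I z \<and> x v = b" for x b
    using v by (auto simp: cube_def)
  have eq: "S1 \<union> S2 = T1 \<union> T2"
  proof (rule set_eqI)
    fix x
    have "hs f I x \<in> {B, insert v B} \<longleftrightarrow> hs f I x - {v} = B"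
      using vB by auto
    then show "x \<in> S1 \<union> S2 \<longleftrightarrow> x \<in> T1 \<union> T2"
      unfolding S1_def S2_def T1_def T2_def using cb[of x] hsd[of x] by auto
  qed
  have "cnt f I z B + cnt f I z (insert v B) = card (S1 \<union> S2)"
    by (simp add: cnt_def S1_def[symmetric] S2_def[symmetric] card_Un_disjoint d1)
  also have "\<dots> = card (T1 \<union> T2)" using eq by simp
  also have "\<dots> = cnt f (I-{v}) (z(v:=False)) B + cnt f (I-{v}) (z(v:=True)) B"
    by (simp add: cnt_def T1_def[symmetric] T2_def[symmetric] card_Un_disjoint d2)
  finally show ?thesis .
qed

lemma allone:
  fixes f :: "('v::finite \<Rightarrow> bool) \<Rightarrow> ('v \<Rightarrow> bool)"
  shows "\<forall>I z. card I = n \<longrightarrow> (\<forall>J z'. card J \<le> n \<longrightarrow> cnt f J z' {} = 1) \<longrightarrow>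
           (\<forall>A\<subseteq>I. cnt f I z A = 1)"
proof (induction n rule: less_induct)
  case (less n)
  show ?case
  proof (intro allI impI)
    fix I :: "'v set" and z A
    assume cI: "card I = n" and g: "\<forall>J z'. card J \<le> n \<longrightarrow> cnt f J z' {} = 1" and AI: "A \<subseteq> I"
    have rel: "cnt f I z B + cnt f I z (insert v B) = 2" if v: "v \<in> I" and B: "B \<subseteq> I - {v}" for v B
    proof -
      have c: "card (I - {v}) < n" using cI v card_Diff1_less[of I v] by simp
      have g': "\<forall>J z'. card J \<le> card (I - {v}) \<longrightarrow> cnt f J z' {} = 1" using g c by auto
      have "cnt f (I-{v}) (z(v:=b)) B = 1" for b
        using less.IH[OF c] g' B by blast
      then show ?thesis using split_cnt[OF v B, of f z] by simp
    qed
    have "finite A" by simp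
    then show "cnt f I z A = 1" using AI
    proof (induction A rule: finite_induct)
      case empty
      then show ?case using g cI by simp
    next
      case (insert a A)
      then have "cnt f I z A = 1" by simp
      moreover have "cnt f I z A + cnt f I z (insert a A) = 2"
        using rel[of a A] insert by auto
      ultimately show ?case by simp
    qed
  qed
qed

lemma rel_min:
  fixes f :: "('v::finite \<Rightarrow> bool) \<Rightarrow> ('v \<Rightarrow> bool)"
  assumes g: "\<forall>J z'. card J < card I \<longrightarrow> cnt f J z' {} = 1" and v: "v \<in> I" and B: "B \<subseteq> I - {v}"
  shows "cnt f I z B + cnt f I z (insert v B) = 2"
proof -
  have c: "card (I - {v}) < card I" using v card_Diff1_less[of I v] by simp
  have g': "\<forall>J z'. card J \<le> card (I - {v}) \<longrightarrow> cnt f J z' {} = 1" using g c by auto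
  have "cnt f (I-{v}) (z(v:=b)) B = 1" for b
    using allone[of "card (I-{v})" f] g' B by blast
  then show ?thesis using split_cnt[OF v B, of f z] by simp
qed

lemma propagate:
  fixes f :: "('v::finite \<Rightarrow> bool) \<Rightarrow> ('v \<Rightarrow> bool)"
  assumes g: "\<forall>J z'. card J < card I \<longrightarrow> cnt f J z' {} = 1"
  and AI: "A \<subseteq> I" and c1: "cnt f I z A = 1"
  shows "cnt f I z {} = 1"
proof -
  have "finite A" by simp
  then show ?thesis using AI c1
  proof (induction A rule: finite_induct)
    case empty then show ?case by simp
  next
    case (insert a A)
    have "cnt f I z A + cnt f I z (insert a A) = 2"
      using rel_min[OF g, of a A z] insert by auto
    then show ?case using insert by simp
  qed
qed

lemma sinkfree:
  fixes f :: "('v::finite \<Rightarrow> bool) \<Rightarrow> ('v \<Rightarrow> bool)"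
  assumes bad: "cnt f I z {} \<noteq> 1" and g: "\<forall>J z'. card J < card I \<longrightarrow> cnt f J z' {} = 1"
  and x: "x \<in> cube I z" and j: "j \<in> I"
  shows "\<exists>i\<in>I. f (x(j:=True)) i \<noteq> f (x(j:=False)) i"
proof (rule ccontr)
  assume "\<not> ?thesis"
  then have same: "\<forall>i\<in>I. f (x(j:=True)) i = f (x(j:=False)) i" by blast
  define x0 where "x0 = x(j:=False)"
  define x1 where "x1 = x(j:=True)"
  have x0c: "x0 \<in> cube I z" and x1c: "x1 \<in> cube I z" using x j by (auto simp: cube_def x0_def x1_def)
  define B where "B = hs f I x0 - {j}"
  have BI: "B \<subseteq> I - {j}" by (auto simp: B_def hs_def)
  have h1: "hs f I x1 - {j} = B" using same unfolding B_def hs_def x0_def x1_def by auto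
  have hj: "j \<in> hs f I x0 \<longleftrightarrow> j \<notin> hs f I x1" using same j unfolding hs_def x0_def x1_def by auto
  have pos: "cnt f I z (hs f I y) \<ge> 1" if "y \<in> cube I z" for y
  proof -
    have "y \<in> {x \<in> cube I z. hs f I x = hs f I y}" using that by simp
    then have "{x \<in> cube I z. hs f I x = hs f I y} \<noteq> {}" by blast
    then show ?thesis unfolding cnt_def by (simp add: Suc_leI card_gt_0_iff)
  qed
  have "{hs f I x0, hs f I x1} = {B, insert j B}"
    using hj h1 B_def by auto
  then have "cnt f I z B \<ge> 1 \<and> cnt f I z (insert j B) \<ge> 1"
    using pos[OF x0c] pos[OF x1c] by (metis doubleton_eq_iff)
  moreover have "cnt f I z B + cnt f I z (insert j B) = 2" using rel_min[OF g j BI] .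
  ultimately have "cnt f I z B = 1" by simp
  then have "cnt f I z {} = 1" using propagate[OF g _ ] BI by blast
  then show False using bad by simp
qed

lemma good_empty: "cnt f {} z {} = 1"
proof -
  have "{x \<in> cube {} z. hs f {} x = {}} = {z}" by (auto simp: cube_def hs_def)
  then show ?thesis by (simp add: cnt_def)
qed

lemma card_cube:
  fixes I :: "'v::finite set"
  shows "card (cube I z) = 2 ^ card I"
proof -
  define g where "g x = {i\<in>I. x i}" for x :: "'v \<Rightarrow> bool"
  have "bij_betw g (cube I z) (Pow I)"
    by (rule bij_betw_byWitness[where f'="\<lambda>S i. if i \<in> I then i \<in> S else z i"])
       (auto simp: g_def cube_def)
  then have "card (cube I z) = card (Pow I)" by (rule bij_betw_same_card)
  then show ?thesis by (simp add: card_Pow)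
qed

lemma arc_iff: "(\<exists>s. (j, s, i) \<in> local_graph f x) \<longleftrightarrow> f (x(j:=True)) i \<noteq> f (x(j:=False)) i"
  by (auto simp: local_graph_def bit_def)

theorem corollary3:
  fixes f :: "('v::finite \<Rightarrow> bool) \<Rightarrow> ('v \<Rightarrow> bool)"
  assumes "\<And>k. 1 \<le> k \<Longrightarrow> k \<le> card (UNIV :: 'v set) \<Longrightarrow>
             card {x. has_short_cycle f x k} \<le> 2 ^ k - 1"
  shows "\<exists>!x. f x = x"
proof (rule ccontr)
  assume nu: "\<not> (\<exists>!x. f x = x)"
  define z0 :: "'v \<Rightarrow> bool" where "z0 = (\<lambda>_. False)"
  have "{x \<in> cube UNIV z0. hs f UNIV x = {}} = {x. f x = x}"
    by (auto simp: cube_def hs_def)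
  then have "cnt f UNIV z0 {} = card {x. f x = x}" by (simp add: cnt_def)
  moreover have "card {x. f x = x} \<noteq> 1"
  proof
    assume "card {x. f x = x} = 1"
    then obtain a where "{x. f x = x} = {a}" by (auto simp: card_1_singleton_iff)
    then have "\<exists>!x. f x = x" by (auto simp: set_eq_iff)
    then show False using nu by simp
  qed
  ultimately have ex: "\<exists>I z. card I = card (UNIV::'v set) \<and> cnt f I z {} \<noteq> 1" by metis
  define P where "P k = (\<exists>I::'v set. \<exists>z. card I = k \<and> cnt f I z {} \<noteq> 1)" for k
  define k0 where "k0 = (LEAST k. P k)"
  have "P k0" unfolding k0_def using ex P_def by (metis LeastI)
  then obtain I z where I: "card I = k0" and bad: "cnt f I z {} \<noteq> 1" by (auto simp: P_def)
  have g: "\<forall>J z'. card J < card I \<longrightarrow> cnt f J z' {} = 1"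
  proof (intro allI impI)
    fix J :: "'v set" and z' assume "card J < card I"
    then have "\<not> P (card J)" using not_less_Least[of "card J" P] I unfolding k0_def by simp
    then show "cnt f J z' {} = 1" unfolding P_def by blast
  qed
  have Ine: "I \<noteq> {}" using bad good_empty by metis
  have cyc: "has_short_cycle f x (card I)" if x: "x \<in> cube I z" for x
  proof -
    have "\<forall>j\<in>I. \<exists>i\<in>I. f (x(j:=True)) i \<noteq> f (x(j:=False)) i"
      using sinkfree[OF bad g x] by blast
    from sinkfree_cycle[OF _ Ine this] obtain vs where vs:
      "length vs \<ge> 1" "length vs \<le> card I" "distinct vs"
      "\<forall>t<length vs. f (x(vs!t:=True)) (vs!((t+1) mod length vs)) \<noteq> f (x(vs!t:=False)) (vs!((t+1) mod length vs))"
      by auto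
    then have "has_cycle_of_length f x (length vs)"
      unfolding has_cycle_of_length_def by (intro exI[of _ vs]) (simp add: arc_iff vs)
    then show ?thesis unfolding has_short_cycle_def using vs(2) by blast
  qed
  have "cube I z \<subseteq> {x. has_short_cycle f x (card I)}" using cyc by blast
  then have "card (cube I z) \<le> card {x. has_short_cycle f x (card I)}" by (rule card_mono[OF finite])
  also have "\<dots> \<le> 2 ^ card I - 1"
  proof -
    have "1 \<le> card I" using Ine by (simp add: Suc_leI card_gt_0_iff)
    moreover have "card I \<le> card (UNIV :: 'v set)" by (rule card_mono) auto
    ultimately show ?thesis by (rule assms)
  qed
  finally have "card (cube I z) \<le> 2 ^ card I - 1" .
  then have "(2::nat) ^ card I \<le> 2 ^ card I - 1" by (simp only: card_cube)
  moreover have "(0::nat) < 2 ^ card I" by simp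
  ultimately show False by linarith
qed

end
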